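(* For every $n\ge1$: if $Q_{2n}$ has a source cycle, then $Q_{4n}$ has a source cycle.
   Context: $Q_{2n}$ is realized as $G_{1,n}$: the graph on quaternary strings $q_1\cdots q_n$, $q_i\in\{0,1,2,3\}$, adjacent iff they differ in exactly one position by $\pm1\pmod4$; origin $\mathbf 0$. A permutation $\sigma$ of $\{1,\dots,n\}$ acts by $\sigma(q_1,\dots,q_n)=(q_{\sigma^{-1}(1)},\dots,q_{\sigma^{-1}(n)})$, an automorphism fixing $\mathbf 0$. A directed Hamilton cycle $H$ of $Q_{2n}$ starting at $\mathbf 0$ is a source cycle if there is an $n\times n$ Latin square $M=(m_{ij})$ on $\{1,\dots,n\}$ with first row the identity such that, with $\sigma_i(j)=m_{ij}$, the edge sets of $\sigma_1(H),\dots,\sigma_n(H)$ partition the edge set of $Q_{2n}$. *)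

theory Defs
  imports Main
begin

text \<open>Vertices of G(1,n) (= Q_{2n}): quaternary strings of length n, as lists.\<close>
definition qvert :: "nat \<Rightarrow> nat list set" where
  "qvert n = {q. length q = n \<and> (\<forall>k<n. q ! k < 4)}"

definition qadj :: "nat \<Rightarrow> nat list \<Rightarrow> nat list \<Rightarrow> bool" where
  "qadj n u v \<longleftrightarrow> u \<in> qvert n \<and> v \<in> qvert n \<and>
     card {k. k < n \<and> u ! k \<noteq> v ! k} = 1 \<and>
     (\<forall>k<n. u ! k \<noteq> v ! k \<longrightarrow> ((u ! k + 1) mod 4 = v ! k \<or> (v ! k + 1) mod 4 = u ! k))"

definition qedges :: "nat \<Rightarrow> nat list set set" where
  "qedges n = {{u, v} | u v. qadj n u v}"

definition qorigin :: "nat \<Rightarrow> nat list" where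
  "qorigin n = replicate n 0"

definition dir_ham_cycle :: "nat \<Rightarrow> nat list list \<Rightarrow> bool" where
  "dir_ham_cycle n H \<longleftrightarrow> distinct H \<and> set H = qvert n \<and> H \<noteq> [] \<and> H ! 0 = qorigin n \<and>
     (\<forall>i<length H. qadj n (H ! i) (H ! ((i + 1) mod length H)))"

definition cycle_edges :: "nat list list \<Rightarrow> nat list set set" where
  "cycle_edges H = {{H ! i, H ! ((i + 1) mod length H)} | i. i < length H}"

definition perm_act :: "nat \<Rightarrow> (nat \<Rightarrow> nat) \<Rightarrow> nat list \<Rightarrow> nat list" where
  "perm_act n \<sigma> q = map (\<lambda>k. q ! (inv_into {0..<n} \<sigma> k)) [0..<n]"

definition latin_square_id :: "nat \<Rightarrow> (nat \<Rightarrow> nat \<Rightarrow> nat) \<Rightarrow> bool" where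
  "latin_square_id n M \<longleftrightarrow>
     (\<forall>i<n. bij_betw (\<lambda>j. M i j) {0..<n} {0..<n}) \<and>
     (\<forall>j<n. bij_betw (\<lambda>i. M i j) {0..<n} {0..<n}) \<and>
     (\<forall>j<n. M 0 j = j)"

definition source_cycle :: "nat \<Rightarrow> nat list list \<Rightarrow> bool" where
  "source_cycle n H \<longleftrightarrow> dir_ham_cycle n H \<and>
     (\<exists>M. latin_square_id n M \<and>
        (\<forall>i<n. \<forall>i'<n. i \<noteq> i' \<longrightarrow>
            cycle_edges (map (perm_act n (M i)) H) \<inter> cycle_edges (map (perm_act n (M i')) H) = {}) \<and>
        (\<Union>i<n. cycle_edges (map (perm_act n (M i)) H)) = qedges n)"

definition has_source_cycle :: "nat \<Rightarrow> bool" where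
  "has_source_cycle n \<longleftrightarrow> (\<exists>H. source_cycle n H)"

end

theory Submission
  imports Defs
begin


definition fT :: "nat \<Rightarrow> nat \<times> nat \<Rightarrow> nat \<times> nat" where
  "fT N p = (case p of (a,b) \<Rightarrow> if (a+b) mod N = 0 then (a, Suc b mod N) else (Suc a mod N, b))"
definition gT :: "nat \<Rightarrow> nat \<times> nat \<Rightarrow> nat \<times> nat" where
  "gT N p = (case p of (a,b) \<Rightarrow> if (a+b) mod N = 0 then (Suc a mod N, b) else (a, Suc b mod N))"
definition tor2 :: "nat \<Rightarrow> nat \<Rightarrow> nat \<Rightarrow> nat \<times> nat" where
  "tor2 N k j = (if j = 0 then ((N - k) mod N, k) else ((N - k + j - 1) mod N, Suc k mod N))"
definition tor :: "nat \<Rightarrow> nat \<Rightarrow> nat \<times> nat" where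
  "tor N t = tor2 N (t div N) (t mod N)"

lemma sum0: "k < (N::nat) \<Longrightarrow> ((N - k) mod N + k) mod N = 0"
  using mod_add_left_eq[of "N-k" N k] by simp

lemma sumj: "k < (N::nat) \<Longrightarrow> 0 < j \<Longrightarrow> j < N \<Longrightarrow> ((N - k + j - 1) mod N + Suc k mod N) mod N = j"
proof -
  assume a: "k < N" "0 < j" "j < N"
  have "((N - k + j - 1) mod N + Suc k mod N) mod N = ((N - k + j - 1) + Suc k) mod N"
    by (simp add: mod_add_eq)
  also have "(N - k + j - 1) + Suc k = N + j" using a by simp
  finally show ?thesis using a by simp
qed

lemma tor2_succ_j0:
  assumes "k < N" "2 \<le> N" shows "tor2 N k 1 = fT N (tor2 N k 0)"
  using assms sum0[OF assms(1)] by (simp add: tor2_def fT_def)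

lemma tor2_succ_j:
  assumes "k < N" "0 < j" "Suc j < N" shows "tor2 N k (Suc j) = fT N (tor2 N k j)"
proof -
  have s: "((N - k + j - 1) mod N + Suc k mod N) mod N \<noteq> 0" using sumj[of k N j] assms by simp
  have "Suc ((N - k + j - 1) mod N) mod N = Suc (N - k + j - 1) mod N" by (rule mod_Suc_eq)
  moreover have "Suc (N - k + j - 1) = N - k + j" using assms by simp
  ultimately have "Suc ((N - k + j - 1) mod N) mod N = (N - k + j) mod N" by simp
  then show ?thesis using assms s by (simp add: tor2_def fT_def)
qed

lemma tor2_succ_last:
  assumes "Suc k < N" "Suc j = N" shows "tor2 N (Suc k) 0 = fT N (tor2 N k j)"
proof -
  have j: "0 < j" using assms by simp
  have s: "((N - k + j - 1) mod N + Suc k mod N) mod N \<noteq> 0" using sumj[of k N j] assms by simp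
  have "Suc ((N - k + j - 1) mod N) mod N = Suc (N - k + j - 1) mod N" by (rule mod_Suc_eq)
  moreover have "Suc (N - k + j - 1) = N - k + j" using assms by simp
  ultimately have "Suc ((N - k + j - 1) mod N) mod N = (N - k + j) mod N" by simp
  moreover have "(N - k + j) = N + (N - Suc k)" using assms by simp
  ultimately have e: "Suc ((N - k + j - 1) mod N) mod N = (N - Suc k) mod N" by simp
  show ?thesis using assms s j e by (simp add: tor2_def fT_def)
qed

lemma tor2_succ_wrap:
  assumes "Suc k = N" "Suc j = N" "2 \<le> N" shows "tor2 N 0 0 = fT N (tor2 N k j)"
proof -
  have j: "0 < j" using assms by simp
  have s: "((N - k + j - 1) mod N + Suc k mod N) mod N \<noteq> 0" using sumj[of k N j] assms by simp
  have "Suc ((N - k + j - 1) mod N) mod N = Suc (N - k + j - 1) mod N" by (rule mod_Suc_eq)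
  moreover have "Suc (N - k + j - 1) = N - k + j" using assms by simp
  ultimately have "Suc ((N - k + j - 1) mod N) mod N = (N - k + j) mod N" by simp
  moreover have "(N - k + j) = N" using assms by simp
  ultimately have e: "Suc ((N - k + j - 1) mod N) mod N = 0" by simp
  show ?thesis using assms s j e by (simp add: tor2_def fT_def)
qed

lemma idx_lt: "k < (N::nat) \<Longrightarrow> j < N \<Longrightarrow> j + k*N < N*N"
proof -
  assume "k < N" "j < N"
  hence "j + k*N < N + k*N" by simp
  also have "\<dots> = Suc k * N" by simp
  also have "\<dots> \<le> N * N" using \<open>k<N\<close> by (intro mult_le_mono1) simp
  finally show ?thesis .
qed

lemma tor_idx: "j < N \<Longrightarrow> tor N (j + k*N) = tor2 N k j"
  by (simp add: tor_def)

lemma tor_succ: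
  assumes N: "N \<ge> 2" and t: "t < N*N"
  shows "tor N (Suc t mod (N*N)) = fT N (tor N t)"
proof -
  define k where "k = t div N"
  define j where "j = t mod N"
  have tk: "t = j + k*N" by (simp add: k_def j_def)
  have kN: "k < N" using t N by (simp add: k_def less_mult_imp_div_less)
  have jN: "j < N" using N by (simp add: j_def)
  have tt: "tor N t = tor2 N k j" using tk jN tor_idx by simp
  show ?thesis
  proof (cases "Suc j < N")
    case True
    have st: "Suc t = Suc j + k*N" using tk by simp
    have st2: "Suc t < N*N" using idx_lt[OF kN True] st by simp
    have "tor N (Suc t mod (N*N)) = tor2 N k (Suc j)" using st st2 tor_idx[OF True] by simp
    moreover have "tor2 N k (Suc j) = fT N (tor2 N k j)"
    proof (cases "j = 0")
      case True
      then show ?thesis using tor2_succ_j0[OF kN N] by simp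
    next
      case False
      then show ?thesis using tor2_succ_j[OF kN _ True] by simp
    qed
    ultimately show ?thesis using tt by simp
  next
    case F: False
    hence jj: "Suc j = N" using jN by simp
    show ?thesis
    proof (cases "Suc k < N")
      case True
      have st: "Suc t = 0 + Suc k * N" using tk jj by simp
      have st2: "Suc t < N*N" using idx_lt[OF True, of 0] st N by simp
      have "tor N (Suc t mod (N*N)) = tor2 N (Suc k) 0" using st st2 tor_idx[of 0 N "Suc k"] N by simp
      then show ?thesis using tt tor2_succ_last[OF True jj] by simp
    next
      case False
      hence kk: "Suc k = N" using kN by simp
      have st: "Suc t = N * N" using tk jj kk by (metis add_Suc mult_Suc)
      have "tor N (Suc t mod (N*N)) = tor2 N 0 0" using st N by (simp add: tor_def)
      then show ?thesis using tt tor2_succ_wrap[OF kk jj N] by simp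
    qed
  qed
qed


definition grid :: "nat \<Rightarrow> (nat \<times> nat) set" where
  "grid N = {0..<N} \<times> {0..<N}"

lemma tor2_sum: "k < (N::nat) \<Longrightarrow> j < N \<Longrightarrow> (fst (tor2 N k j) + snd (tor2 N k j)) mod N = j"
  using sum0[of k N] sumj[of k N j] by (auto simp: tor2_def)

lemma sucmod: "k < (N::nat) \<Longrightarrow> Suc k mod N = (if Suc k = N then 0 else Suc k)"
  by (simp add: mod_Suc)

lemma tor2_inj:
  assumes "k < N" "j < N" "k' < N" "j' < N" "tor2 N k j = tor2 N k' j'"
  shows "k = k' \<and> j = j'"
proof -
  have jj: "j = j'" using tor2_sum[of k N j] tor2_sum[of k' N j'] assms by metis
  show ?thesis
  proof (cases "j = 0")
    case True thus ?thesis using assms jj by (simp add: tor2_def)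
  next
    case False
    hence "Suc k mod N = Suc k' mod N" using assms jj by (simp add: tor2_def)
    hence "k = k'" using sucmod[of k N] sucmod[of k' N] assms by (auto split: if_splits)
    thus ?thesis using jj by simp
  qed
qed

lemma tor_range:
  assumes "t < N*N" shows "tor N t \<in> grid N"
proof -
  have "t div N < N" using assms by (simp add: less_mult_imp_div_less)
  thus ?thesis using assms by (auto simp: tor_def tor2_def grid_def)
qed

lemma tor_inj: "inj_on (tor N) {0..<N*N}"
proof (rule inj_onI)
  fix t t' assume a: "t \<in> {0..<N*N}" "t' \<in> {0..<N*N}" "tor N t = tor N t'"
  hence N: "0 < N" by (cases "N = 0") auto
  have "t div N < N" "t' div N < N" using a by (auto simp: less_mult_imp_div_less)
  moreover have "t mod N < N" "t' mod N < N" using N by auto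
  ultimately have "t div N = t' div N \<and> t mod N = t' mod N"
    using tor2_inj a(3) unfolding tor_def by blast
  thus "t = t'" by (metis div_mult_mod_eq)
qed

definition TL :: "nat \<Rightarrow> (nat \<times> nat) list" where
  "TL N = map (tor N) [0..<N*N]"

lemma TL_len: "length (TL N) = N*N" by (simp add: TL_def)
lemma TL_nth: "i < N*N \<Longrightarrow> TL N ! i = tor N i" by (simp add: TL_def)
lemma TL_distinct: "distinct (TL N)" by (simp add: TL_def distinct_map tor_inj)
lemma TL_set: "set (TL N) = grid N"
proof -
  have s: "set (TL N) \<subseteq> grid N" using tor_range by (auto simp: TL_def)
  have "card (set (TL N)) = N*N" using TL_distinct TL_len distinct_card by metis
  moreover have "card (grid N) = N*N" by (simp add: grid_def)
  moreover have "finite (grid N)" by (simp add: grid_def)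
  ultimately show ?thesis using s by (metis card_subset_eq)
qed
lemma TL_0: "2 \<le> N \<Longrightarrow> TL N ! 0 = (0,0)"
  by (simp add: TL_def tor_def tor2_def)
lemma TL_succ: "2 \<le> N \<Longrightarrow> i < N*N \<Longrightarrow> TL N ! ((i+1) mod (N*N)) = fT N (TL N ! i)"
  using tor_succ[of N i] by (simp add: TL_nth)

lemma fT_grid: "0 < N \<Longrightarrow> p \<in> grid N \<Longrightarrow> fT N p \<in> grid N"
  by (auto simp: fT_def grid_def split: prod.splits)
lemma gT_grid: "0 < N \<Longrightarrow> p \<in> grid N \<Longrightarrow> gT N p \<in> grid N"
  by (auto simp: gT_def grid_def split: prod.splits)

lemma fT_cases: "fT N (a,b) = (Suc a mod N, b) \<or> fT N (a,b) = (a, Suc b mod N)"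
  by (simp add: fT_def)
lemma gT_cases: "gT N (a,b) = (Suc a mod N, b) \<or> gT N (a,b) = (a, Suc b mod N)"
  by (simp add: gT_def)
lemma fgT_h: "fT N (a,b) = (Suc a mod N, b) \<or> gT N (a,b) = (Suc a mod N, b)"
  by (simp add: fT_def gT_def)
lemma fgT_v: "fT N (a,b) = (a, Suc b mod N) \<or> gT N (a,b) = (a, Suc b mod N)"
  by (simp add: fT_def gT_def)
lemma gT_swap: "gT N (b,a) = prod.swap (fT N (a,b))"
  by (simp add: fT_def gT_def add.commute)

lemma suc_ne: "2 \<le> N \<Longrightarrow> a < (N::nat) \<Longrightarrow> Suc a mod N \<noteq> a"
  using sucmod[of a N] by auto
lemma suc2_ne: "3 \<le> N \<Longrightarrow> a < (N::nat) \<Longrightarrow> Suc (Suc a mod N) mod N \<noteq> a"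
proof -
  assume a: "3 \<le> N" "a < N"
  have "Suc (Suc a mod N) mod N = Suc (Suc a) mod N" by (rule mod_Suc_eq)
  thus ?thesis using a by (cases "Suc (Suc a) < N") (auto simp: mod_if)
qed

lemma fg_disj:
  assumes N: "3 \<le> N" and p: "p \<in> grid N" and q: "q \<in> grid N"
  shows "{p, fT N p} \<noteq> {q, gT N q}"
proof
  assume e: "{p, fT N p} = {q, gT N q}"
  obtain a b where pa: "p = (a,b)" by fastforce
  obtain c d where qc: "q = (c,d)" by fastforce
  have r: "a < N" "b < N" "c < N" "d < N" using p q pa qc by (auto simp: grid_def)
  have ne1: "Suc a mod N \<noteq> a" "Suc b mod N \<noteq> b" "Suc c mod N \<noteq> c" "Suc d mod N \<noteq> d"
    using suc_ne r N by auto
  have ne2: "Suc (Suc c mod N) mod N \<noteq> c" "Suc (Suc d mod N) mod N \<noteq> d"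
    using suc2_ne r N by auto
  from e have "(p = q \<and> fT N p = gT N q) \<or> (p = gT N q \<and> fT N p = q)"
    by (auto simp: doubleton_eq_iff)
  thus False
  proof
    assume "p = q \<and> fT N p = gT N q"
    thus False using ne1 pa qc by (auto simp: fT_def gT_def split: if_splits)
  next
    assume h: "p = gT N q \<and> fT N p = q"
    show False
    proof (cases "(c + d) mod N = 0")
      case True
      hence "p = (Suc c mod N, d)" using h qc by (simp add: gT_def)
      thus False using h qc ne1 ne2 by (auto simp: fT_def split: if_splits)
    next
      case False
      hence "p = (c, Suc d mod N)" using h qc by (simp add: gT_def)
      thus False using h qc ne1 ne2 by (auto simp: fT_def split: if_splits)
    qed
  qed
qed



lemma qvert_len: "q \<in> qvert n \<Longrightarrow> length q = n" by (simp add: qvert_def)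

lemma finite_qvert: "finite (qvert n)"
proof -
  have "qvert n \<subseteq> {xs. set xs \<subseteq> {0..<4} \<and> length xs = n}"
    by (auto simp: qvert_def in_set_conv_nth)
  moreover have "finite {xs. set xs \<subseteq> {0..<4::nat} \<and> length xs = n}"
    by (rule finite_lists_length_eq) simp
  ultimately show ?thesis by (rule finite_subset)
qed

lemma qvert_append:
  assumes "length x = n" "length y = n"
  shows "x @ y \<in> qvert (2*n) \<longleftrightarrow> x \<in> qvert n \<and> y \<in> qvert n"
proof -
  have "(\<forall>k<2*n. (x@y) ! k < 4) \<longleftrightarrow> (\<forall>k<n. x!k < 4) \<and> (\<forall>k<n. y!k < 4)"
  proof safe
    fix k assume "\<forall>k<2*n. (x@y) ! k < 4" "k < n"
    thus "x!k < 4" using assms by (metis nth_append less_imp_le_nat mult_2 trans_less_add1)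
  next
    fix k assume a: "\<forall>k<2*n. (x@y) ! k < 4" "k < n"
    have "(x@y) ! (n + k) < 4" using a by simp
    thus "y!k < 4" using assms by (simp add: nth_append)
  next
    fix k assume "\<forall>k<n. x!k < 4" "\<forall>k<n. y!k < 4" "k < 2*n"
    thus "(x@y)!k < 4" using assms by (auto simp: nth_append)
  qed
  thus ?thesis using assms by (simp add: qvert_def)
qed

lemma qvert2_split:
  assumes "v \<in> qvert (2*n)"
  obtains x y where "v = x @ y" "x \<in> qvert n" "y \<in> qvert n"
proof -
  have l: "length v = 2*n" using assms by (simp add: qvert_def)
  let ?x = "take n v" and ?y = "drop n v"
  have "v = ?x @ ?y" by simp
  moreover have "length ?x = n" "length ?y = n" using l by auto
  ultimately have "?x \<in> qvert n \<and> ?y \<in> qvert n" using qvert_append assms by metis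
  thus ?thesis using that[of ?x ?y] by simp
qed

lemma qadj_sym: "qadj n u v \<Longrightarrow> qadj n v u"
proof -
  assume a: "qadj n u v"
  have "{k. k < n \<and> v ! k \<noteq> u ! k} = {k. k < n \<and> u ! k \<noteq> v ! k}" by auto
  thus ?thesis using a unfolding qadj_def by metis
qed

lemma qadj_neq: "qadj n u v \<Longrightarrow> u \<noteq> v"
  unfolding qadj_def by auto

lemma qadj_vert: "qadj n u v \<Longrightarrow> u \<in> qvert n \<and> v \<in> qvert n"
  unfolding qadj_def by auto

definition dset :: "nat \<Rightarrow> nat list \<Rightarrow> nat list \<Rightarrow> nat set" where
  "dset n u v = {k. k < n \<and> u ! k \<noteq> v ! k}"

definition pm1 :: "nat \<Rightarrow> nat list \<Rightarrow> nat list \<Rightarrow> bool" where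
  "pm1 n u v \<longleftrightarrow> (\<forall>k<n. u ! k \<noteq> v ! k \<longrightarrow> ((u ! k + 1) mod 4 = v ! k \<or> (v ! k + 1) mod 4 = u ! k))"

lemma qadj_alt: "qadj n u v \<longleftrightarrow> u \<in> qvert n \<and> v \<in> qvert n \<and> card (dset n u v) = 1 \<and> pm1 n u v"
  unfolding qadj_def dset_def pm1_def by simp

lemma dset_append:
  assumes "length x = n" "length y = n" "length x' = n" "length y' = n"
  shows "dset (2*n) (x@y) (x'@y') = dset n x x' \<union> (\<lambda>k. n + k) ` dset n y y'"
proof (rule set_eqI)
  fix k
  show "k \<in> dset (2*n) (x@y) (x'@y') \<longleftrightarrow> k \<in> dset n x x' \<union> (\<lambda>k. n + k) ` dset n y y'"
  proof (cases "k < n")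
    case True thus ?thesis using assms by (auto simp: dset_def nth_append)
  next
    case False
    then obtain m where m: "k = n + m" by (metis le_Suc_ex not_less)
    thus ?thesis using assms by (auto simp: dset_def nth_append)
  qed
qed

lemma card_dset_append:
  assumes "length x = n" "length y = n" "length x' = n" "length y' = n"
  shows "card (dset (2*n) (x@y) (x'@y')) = card (dset n x x') + card (dset n y y')"
proof -
  have f1: "finite (dset n x x')" "finite (dset n y y')" by (auto simp: dset_def)
  have d: "dset n x x' \<inter> (\<lambda>k. n + k) ` dset n y y' = {}" by (auto simp: dset_def)
  have "card ((\<lambda>k. n + k) ` dset n y y') = card (dset n y y')" by (simp add: card_image)
  thus ?thesis using dset_append[OF assms] card_Un_disjoint[OF f1(1) _ d] f1 by simp
qed

lemma pm1_append:
  assumes "length x = n" "length y = n" "length x' = n" "length y' = n"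
  shows "pm1 (2*n) (x@y) (x'@y') \<longleftrightarrow> pm1 n x x' \<and> pm1 n y y'"
proof
  assume a: "pm1 (2*n) (x@y) (x'@y')"
  have "pm1 n x x'" unfolding pm1_def
  proof (intro allI impI)
    fix k assume "k < n" "x!k \<noteq> x'!k"
    thus "(x ! k + 1) mod 4 = x' ! k \<or> (x' ! k + 1) mod 4 = x ! k"
      using a assms unfolding pm1_def by (metis nth_append less_imp_le_nat mult_2 trans_less_add1)
  qed
  moreover have "pm1 n y y'" unfolding pm1_def
  proof (intro allI impI)
    fix k assume k: "k < n" "y!k \<noteq> y'!k"
    hence "(x@y)!(n+k) \<noteq> (x'@y')!(n+k)" using assms by (simp add: nth_append)
    hence "((x@y)!(n+k) + 1) mod 4 = (x'@y')!(n+k) \<or> ((x'@y')!(n+k) + 1) mod 4 = (x@y)!(n+k)"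
      using a k unfolding pm1_def by simp
    thus "(y ! k + 1) mod 4 = y' ! k \<or> (y' ! k + 1) mod 4 = y ! k"
      using assms by (simp add: nth_append)
  qed
  ultimately show "pm1 n x x' \<and> pm1 n y y'" by simp
next
  assume a: "pm1 n x x' \<and> pm1 n y y'"
  show "pm1 (2*n) (x@y) (x'@y')" unfolding pm1_def
  proof (intro allI impI)
    fix k assume k: "k < 2*n" "(x@y)!k \<noteq> (x'@y')!k"
    show "((x@y) ! k + 1) mod 4 = (x'@y') ! k \<or> ((x'@y') ! k + 1) mod 4 = (x@y) ! k"
    proof (cases "k < n")
      case True thus ?thesis using a k assms unfolding pm1_def by (simp add: nth_append)
    next
      case False
      then obtain m where m: "k = n + m" by (metis le_Suc_ex not_less)
      hence "m < n" using k by simp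
      thus ?thesis using a k assms m unfolding pm1_def by (simp add: nth_append)
    qed
  qed
qed

lemma dset_empty: "length u = n \<Longrightarrow> length v = n \<Longrightarrow> dset n u v = {} \<longleftrightarrow> u = v"
  unfolding dset_def by (auto intro: nth_equalityI)

lemma pm1_refl: "pm1 n u u" by (simp add: pm1_def)

lemma qadj_append:
  assumes "length x = n" "length y = n" "length x' = n" "length y' = n"
  shows "qadj (2*n) (x@y) (x'@y') \<longleftrightarrow>
    (qadj n x x' \<and> y = y' \<and> y \<in> qvert n) \<or> (x = x' \<and> x \<in> qvert n \<and> qadj n y y')"
proof -
  have fx: "finite (dset n x x')" "finite (dset n y y')" by (auto simp: dset_def)
  have cx: "card (dset n x x') = 0 \<longleftrightarrow> x = x'" using dset_empty[OF assms(1,3)] fx by simp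
  have cy: "card (dset n y y') = 0 \<longleftrightarrow> y = y'" using dset_empty[OF assms(2,4)] fx by simp
  have e: "card (dset n x x') + card (dset n y y') = 1 \<longleftrightarrow>
      (card (dset n x x') = 1 \<and> y = y') \<or> (x = x' \<and> card (dset n y y') = 1)"
    using cx cy by arith
  show ?thesis
    unfolding qadj_alt card_dset_append[OF assms] pm1_append[OF assms]
      qvert_append[OF assms(1,2)] qvert_append[OF assms(3,4)] e
    using pm1_refl by blast
qed



lemma perm_len: "length (perm_act n \<sigma> q) = n" by (simp add: perm_act_def)

lemma perm_nth: "k < n \<Longrightarrow> perm_act n \<sigma> q ! k = q ! inv_into {0..<n} \<sigma> k"
  by (simp add: perm_act_def)

lemma perm_qvert:
  assumes b: "bij_betw \<sigma> {0..<n} {0..<n}" and q: "q \<in> qvert n"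
  shows "perm_act n \<sigma> q \<in> qvert n"
proof -
  have "\<And>k. k < n \<Longrightarrow> inv_into {0..<n} \<sigma> k < n"
  proof -
    fix k assume "k < n"
    hence km: "k \<in> \<sigma> ` {0..<n}" using b by (simp add: bij_betw_def)
    show "inv_into {0..<n} \<sigma> k < n" using inv_into_into[OF km] by simp
  qed
  thus ?thesis using q by (auto simp: qvert_def perm_act_def)
qed

lemma perm_inj:
  assumes b: "bij_betw \<sigma> {0..<n} {0..<n}"
  shows "inj_on (perm_act n \<sigma>) (qvert n)"
proof (rule inj_onI)
  fix q q' assume q: "q \<in> qvert n" "q' \<in> qvert n" "perm_act n \<sigma> q = perm_act n \<sigma> q'"
  have inj: "inj_on \<sigma> {0..<n}" using b by (simp add: bij_betw_def)
  show "q = q'"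
  proof (rule nth_equalityI)
    show "length q = length q'" using q by (simp add: qvert_def)
  next
    fix m assume "m < length q"
    hence m: "m < n" using q by (simp add: qvert_def)
    hence sm: "\<sigma> m < n" using b by (auto simp: bij_betw_def)
    have "inv_into {0..<n} \<sigma> (\<sigma> m) = m" using inj m by (simp add: inv_into_f_f)
    thus "q ! m = q' ! m" using perm_nth[OF sm, of \<sigma> q] perm_nth[OF sm, of \<sigma> q'] q(3) by simp
  qed
qed

lemma perm_image:
  assumes b: "bij_betw \<sigma> {0..<n} {0..<n}"
  shows "perm_act n \<sigma> ` qvert n = qvert n"
proof -
  have "perm_act n \<sigma> ` qvert n \<subseteq> qvert n" using perm_qvert[OF b] by blast
  thus ?thesis by (rule endo_inj_surj[OF finite_qvert _ perm_inj[OF b]])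
qed

lemma bij_of_inj: "finite A \<Longrightarrow> f ` A \<subseteq> A \<Longrightarrow> inj_on f A \<Longrightarrow> bij_betw f A A"
  by (simp add: bij_betw_def endo_inj_surj)

lemma bij_lt: "bij_betw (f::nat\<Rightarrow>nat) {0..<n} {0..<n} \<Longrightarrow> (j::nat) < n \<Longrightarrow> f j < n"
  using bij_betw_apply[of f "{0..<n}" "{0..<n}" j] by simp

definition dbl :: "nat \<Rightarrow> (nat \<Rightarrow> nat \<Rightarrow> nat) \<Rightarrow> nat \<Rightarrow> nat \<Rightarrow> nat" where
  "dbl n M r j = (if r < n then (if j < n then M r j else n + M r (j - n))
                 else (if j < n then n + M (r - n) j else M (r - n) (j - n)))"

lemma blk1:
  fixes f g :: "nat \<Rightarrow> nat" and n :: nat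
  assumes "bij_betw f {0..<n} {0..<n}" "bij_betw g {0..<n} {0..<n}"
  shows "bij_betw (\<lambda>j. if j < n then f j else n + g (j - n)) {0..<2*n} {0..<2*n}"
proof (rule bij_of_inj)
  have fi: "inj_on f {0..<n}" "inj_on g {0..<n}" using assms by (auto simp: bij_betw_def)
  have fr: "\<And>j. j < n \<Longrightarrow> f j < n" "\<And>j. j < n \<Longrightarrow> g j < n"
    using bij_lt[OF assms(1)] bij_lt[OF assms(2)] by auto
  show "(\<lambda>j. if j < n then f j else n + g (j - n)) ` {0..<2*n} \<subseteq> {0..<2*n}"
  proof
    fix z assume "z \<in> (\<lambda>j. if j < n then f j else n + g (j - n)) ` {0..<2*n}"
    then obtain j where j0: "j \<in> {0..<2*n}" "z = (if j < n then f j else n + g (j - n))" by blast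
    have j: "j < 2*n" "z = (if j < n then f j else n + g (j - n))" using j0 by auto
    show "z \<in> {0..<2*n}"
    proof (cases "j < n")
      case True thus ?thesis using j fr(1)[OF True] by simp
    next
      case False hence "j - n < n" using j by simp
      thus ?thesis using j fr(2)[of "j-n"] False by simp
    qed
  qed
  show "inj_on (\<lambda>j. if j < n then f j else n + g (j - n)) {0..<2*n}"
  proof (rule inj_onI)
    fix j j' assume a: "j \<in> {0..<2*n}" "j' \<in> {0..<2*n}"
      "(\<lambda>j. if j < n then f j else n + g (j - n)) j = (\<lambda>j. if j < n then f j else n + g (j - n)) j'"
    show "j = j'"
    proof (cases "j < n")
      case T1: True
      show ?thesis
      proof (cases "j' < n")
        case True
        hence fe: "f j = f j'" using a T1 by simp
        show ?thesis using inj_onD[OF fi(1) fe] T1 True by simp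
      next
        case False
        hence "j' - n < n" using a by simp
        thus ?thesis using a T1 False fr(1)[OF T1] fr(2)[of "j'-n"] by simp
      qed
    next
      case F1: False
      hence jn: "j - n < n" using a by simp
      show ?thesis
      proof (cases "j' < n")
        case True
        thus ?thesis using a F1 fr(1)[OF True] fr(2)[OF jn] by simp
      next
        case False
        hence jn': "j' - n < n" using a by simp
        have ge: "g (j - n) = g (j' - n)" using a F1 False by simp
        have "j - n = j' - n" using inj_onD[OF fi(2) ge] jn jn' by simp
        thus ?thesis using F1 False by simp
      qed
    qed
  qed
qed simp

lemma blk2:
  fixes f g :: "nat \<Rightarrow> nat" and n :: nat
  assumes "bij_betw f {0..<n} {0..<n}" "bij_betw g {0..<n} {0..<n}"
  shows "bij_betw (\<lambda>j. if j < n then n + f j else g (j - n)) {0..<2*n} {0..<2*n}"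
proof (rule bij_of_inj)
  have fi: "inj_on f {0..<n}" "inj_on g {0..<n}" using assms by (auto simp: bij_betw_def)
  have fr: "\<And>j. j < n \<Longrightarrow> f j < n" "\<And>j. j < n \<Longrightarrow> g j < n"
    using bij_lt[OF assms(1)] bij_lt[OF assms(2)] by auto
  show "(\<lambda>j. if j < n then n + f j else g (j - n)) ` {0..<2*n} \<subseteq> {0..<2*n}"
  proof
    fix z assume "z \<in> (\<lambda>j. if j < n then n + f j else g (j - n)) ` {0..<2*n}"
    then obtain j where j0: "j \<in> {0..<2*n}" "z = (if j < n then n + f j else g (j - n))" by blast
    have j: "j < 2*n" "z = (if j < n then n + f j else g (j - n))" using j0 by auto
    show "z \<in> {0..<2*n}"
    proof (cases "j < n")
      case True thus ?thesis using j fr(1)[OF True] by simp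
    next
      case False hence "j - n < n" using j by simp
      thus ?thesis using j fr(2)[of "j-n"] False by simp
    qed
  qed
  show "inj_on (\<lambda>j. if j < n then n + f j else g (j - n)) {0..<2*n}"
  proof (rule inj_onI)
    fix j j' assume a: "j \<in> {0..<2*n}" "j' \<in> {0..<2*n}"
      "(\<lambda>j. if j < n then n + f j else g (j - n)) j = (\<lambda>j. if j < n then n + f j else g (j - n)) j'"
    show "j = j'"
    proof (cases "j < n")
      case T1: True
      show ?thesis
      proof (cases "j' < n")
        case True
        hence fe: "f j = f j'" using a T1 by simp
        show ?thesis using inj_onD[OF fi(1) fe] T1 True by simp
      next
        case False
        hence "j' - n < n" using a by simp
        thus ?thesis using a T1 False fr(1)[OF T1] fr(2)[of "j'-n"] by simp
      qed
    next
      case F1: False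
      hence jn: "j - n < n" using a by simp
      show ?thesis
      proof (cases "j' < n")
        case True
        thus ?thesis using a F1 fr(1)[OF True] fr(2)[OF jn] by simp
      next
        case False
        hence jn': "j' - n < n" using a by simp
        have ge: "g (j - n) = g (j' - n)" using a F1 False by simp
        have "j - n = j' - n" using inj_onD[OF fi(2) ge] jn jn' by simp
        thus ?thesis using F1 False by simp
      qed
    qed
  qed
qed simp

lemma dbl_latin:
  assumes L: "latin_square_id n M" and n: "1 \<le> n"
  shows "latin_square_id (2*n) (dbl n M)"
  unfolding latin_square_id_def
proof (intro conjI allI impI)
  have R: "\<And>i. i < n \<Longrightarrow> bij_betw (\<lambda>j. M i j) {0..<n} {0..<n}"
   and C: "\<And>j. j < n \<Longrightarrow> bij_betw (\<lambda>i. M i j) {0..<n} {0..<n}"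
   and F: "\<And>j. j < n \<Longrightarrow> M 0 j = j" using L by (auto simp: latin_square_id_def)
  fix i assume i: "i < 2*n"
  show "bij_betw (\<lambda>j. dbl n M i j) {0..<2*n} {0..<2*n}"
  proof (cases "i < n")
    case True
    have "(\<lambda>j. dbl n M i j) = (\<lambda>j. if j < n then M i j else n + M i (j - n))"
      using True by (auto simp: dbl_def)
    thus ?thesis using blk1[OF R[OF True] R[OF True]] by simp
  next
    case False
    have "(\<lambda>j. dbl n M i j) = (\<lambda>j. if j < n then n + M (i-n) j else M (i-n) (j - n))"
      using False by (auto simp: dbl_def)
    moreover have "i - n < n" using i False by simp
    ultimately show ?thesis using blk2[OF R R] by simp
  qed
next
  have R: "\<And>i. i < n \<Longrightarrow> bij_betw (\<lambda>j. M i j) {0..<n} {0..<n}"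
   and C: "\<And>j. j < n \<Longrightarrow> bij_betw (\<lambda>i. M i j) {0..<n} {0..<n}"
   and F: "\<And>j. j < n \<Longrightarrow> M 0 j = j" using L by (auto simp: latin_square_id_def)
  fix j assume j: "j < 2*n"
  show "bij_betw (\<lambda>i. dbl n M i j) {0..<2*n} {0..<2*n}"
  proof (cases "j < n")
    case True
    have "(\<lambda>i. dbl n M i j) = (\<lambda>i. if i < n then M i j else n + M (i - n) j)"
      using True by (auto simp: dbl_def)
    thus ?thesis using blk1[OF C[OF True] C[OF True]] by simp
  next
    case False
    have "(\<lambda>i. dbl n M i j) = (\<lambda>i. if i < n then n + M i (j-n) else M (i-n) (j - n))"
      using False by (auto simp: dbl_def)
    moreover have "j - n < n" using j False by simp
    ultimately show ?thesis using blk2[OF C C] by simp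
  qed
next
  have F: "\<And>j. j < n \<Longrightarrow> M 0 j = j" using L by (auto simp: latin_square_id_def)
  fix j assume j: "j < 2*n"
  show "dbl n M 0 j = j" using n j F[of "j - n"] F[of j] by (auto simp: dbl_def)
qed

lemma perm_dbl_lo:
  assumes L: "latin_square_id n M" and n: "1 \<le> n" and r: "r < n"
    and x: "length x = n" and y: "length y = n"
  shows "perm_act (2*n) (dbl n M r) (x @ y) = perm_act n (M r) x @ perm_act n (M r) y"
proof -
  have B: "bij_betw (M r) {0..<n} {0..<n}" using L r by (simp add: latin_square_id_def)
  have B2: "bij_betw (dbl n M r) {0..<2*n} {0..<2*n}"
    using dbl_latin[OF L n] r by (simp add: latin_square_id_def)
  have i2: "inj_on (dbl n M r) {0..<2*n}" using B2 by (simp add: bij_betw_def)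
  have iv: "\<And>k. k < n \<Longrightarrow> inv_into {0..<n} (M r) k < n \<and> M r (inv_into {0..<n} (M r) k) = k"
  proof -
    fix k assume "k < n"
    hence km: "k \<in> M r ` {0..<n}" using B by (simp add: bij_betw_def)
    show "inv_into {0..<n} (M r) k < n \<and> M r (inv_into {0..<n} (M r) k) = k"
      using inv_into_into[OF km] f_inv_into_f[OF km] by simp
  qed
  show ?thesis
  proof (rule nth_equalityI)
    show "length (perm_act (2*n) (dbl n M r) (x @ y)) = length (perm_act n (M r) x @ perm_act n (M r) y)"
      by (simp add: perm_len)
  next
    fix k assume "k < length (perm_act (2*n) (dbl n M r) (x @ y))"
    hence k: "k < 2*n" by (simp add: perm_len)
    show "perm_act (2*n) (dbl n M r) (x @ y) ! k = (perm_act n (M r) x @ perm_act n (M r) y) ! k"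
    proof (cases "k < n")
      case True
      let ?m = "inv_into {0..<n} (M r) k"
      have e: "inv_into {0..<2*n} (dbl n M r) k = ?m"
        using iv[OF True] r by (intro inv_into_f_eq[OF i2]) (auto simp: dbl_def)
      have "perm_act (2*n) (dbl n M r) (x @ y) ! k = (x @ y) ! ?m" using perm_nth[OF k] e by simp
      also have "\<dots> = x ! ?m" using iv[OF True] x by (simp add: nth_append)
      also have "\<dots> = perm_act n (M r) x ! k" using perm_nth[OF True] by simp
      also have "\<dots> = (perm_act n (M r) x @ perm_act n (M r) y) ! k" using True by (simp add: nth_append perm_len)
      finally show ?thesis .
    next
      case False
      let ?m = "inv_into {0..<n} (M r) (k - n)"
      have kn: "k - n < n" using k False by simp
      have e: "inv_into {0..<2*n} (dbl n M r) k = n + ?m"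
        using iv[OF kn] r False by (intro inv_into_f_eq[OF i2]) (auto simp: dbl_def)
      have "perm_act (2*n) (dbl n M r) (x @ y) ! k = (x @ y) ! (n + ?m)" using perm_nth[OF k] e by simp
      also have "\<dots> = y ! ?m" using x by (simp add: nth_append)
      also have "\<dots> = perm_act n (M r) y ! (k - n)" using perm_nth[OF kn] by simp
      also have "\<dots> = (perm_act n (M r) x @ perm_act n (M r) y) ! k" using False by (simp add: nth_append perm_len)
      finally show ?thesis .
    qed
  qed
qed

lemma perm_dbl_hi:
  assumes L: "latin_square_id n M" and n: "1 \<le> n" and r: "r < n"
    and x: "length x = n" and y: "length y = n"
  shows "perm_act (2*n) (dbl n M (n + r)) (x @ y) = perm_act n (M r) y @ perm_act n (M r) x"
proof -
  have B: "bij_betw (M r) {0..<n} {0..<n}" using L r by (simp add: latin_square_id_def)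
  have B2: "bij_betw (dbl n M (n+r)) {0..<2*n} {0..<2*n}"
    using dbl_latin[OF L n] r by (simp add: latin_square_id_def)
  have i2: "inj_on (dbl n M (n+r)) {0..<2*n}" using B2 by (simp add: bij_betw_def)
  have iv: "\<And>k. k < n \<Longrightarrow> inv_into {0..<n} (M r) k < n \<and> M r (inv_into {0..<n} (M r) k) = k"
  proof -
    fix k assume "k < n"
    hence km: "k \<in> M r ` {0..<n}" using B by (simp add: bij_betw_def)
    show "inv_into {0..<n} (M r) k < n \<and> M r (inv_into {0..<n} (M r) k) = k"
      using inv_into_into[OF km] f_inv_into_f[OF km] by simp
  qed
  show ?thesis
  proof (rule nth_equalityI)
    show "length (perm_act (2*n) (dbl n M (n+r)) (x @ y)) = length (perm_act n (M r) y @ perm_act n (M r) x)"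
      by (simp add: perm_len)
  next
    fix k assume "k < length (perm_act (2*n) (dbl n M (n+r)) (x @ y))"
    hence k: "k < 2*n" by (simp add: perm_len)
    show "perm_act (2*n) (dbl n M (n+r)) (x @ y) ! k = (perm_act n (M r) y @ perm_act n (M r) x) ! k"
    proof (cases "k < n")
      case True
      let ?m = "inv_into {0..<n} (M r) k"
      have e: "inv_into {0..<2*n} (dbl n M (n+r)) k = n + ?m"
        using iv[OF True] r by (intro inv_into_f_eq[OF i2]) (auto simp: dbl_def)
      have "perm_act (2*n) (dbl n M (n+r)) (x @ y) ! k = (x @ y) ! (n + ?m)" using perm_nth[OF k] e by simp
      also have "\<dots> = y ! ?m" using x by (simp add: nth_append)
      also have "\<dots> = perm_act n (M r) y ! k" using perm_nth[OF True] by simp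
      also have "\<dots> = (perm_act n (M r) y @ perm_act n (M r) x) ! k" using True by (simp add: nth_append perm_len)
      finally show ?thesis .
    next
      case False
      let ?m = "inv_into {0..<n} (M r) (k - n)"
      have kn: "k - n < n" using k False by simp
      have e: "inv_into {0..<2*n} (dbl n M (n+r)) k = ?m"
        using iv[OF kn] r False by (intro inv_into_f_eq[OF i2]) (auto simp: dbl_def)
      have "perm_act (2*n) (dbl n M (n+r)) (x @ y) ! k = (x @ y) ! ?m" using perm_nth[OF k] e by simp
      also have "\<dots> = x ! ?m" using iv[OF kn] x by (simp add: nth_append)
      also have "\<dots> = perm_act n (M r) x ! (k - n)" using perm_nth[OF kn] by simp
      also have "\<dots> = (perm_act n (M r) y @ perm_act n (M r) x) ! k" using False by (simp add: nth_append perm_len)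
      finally show ?thesis .
    qed
  qed
qed



lemma smod_lt: "a < (N::nat) \<Longrightarrow> Suc a mod N < N"
  using mod_less_divisor[of N "Suc a"] by simp

lemma CE:
  assumes "2 \<le> N"
  shows "cycle_edges (map F (TL N)) = {{F p, F (fT N p)} | p. p \<in> grid N}"
proof -
  have L: "length (map F (TL N)) = N*N" by (simp add: TL_len)
  show ?thesis
  proof (rule set_eqI)
    fix e
    show "e \<in> cycle_edges (map F (TL N)) \<longleftrightarrow> e \<in> {{F p, F (fT N p)} | p. p \<in> grid N}"
    proof
      assume "e \<in> cycle_edges (map F (TL N))"
      then obtain i where i: "i < N*N" "e = {map F (TL N) ! i, map F (TL N) ! ((i+1) mod (N*N))}"
        unfolding cycle_edges_def L by blast
      have "(i+1) mod (N*N) < N*N" using smod_lt[OF i(1)] by simp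
      hence "e = {F (TL N ! i), F (fT N (TL N ! i))}" using i TL_succ[OF assms i(1)] by (simp add: TL_len)
      moreover have "TL N ! i \<in> grid N" using i(1) TL_set nth_mem TL_len by metis
      ultimately show "e \<in> {{F p, F (fT N p)} | p. p \<in> grid N}" by blast
    next
      assume "e \<in> {{F p, F (fT N p)} | p. p \<in> grid N}"
      then obtain p where p: "p \<in> grid N" "e = {F p, F (fT N p)}" by blast
      then obtain i where i: "i < N*N" "TL N ! i = p" using TL_set TL_len in_set_conv_nth by metis
      have "(i+1) mod (N*N) < N*N" using smod_lt[OF i(1)] by simp
      hence "e = {map F (TL N) ! i, map F (TL N) ! ((i+1) mod (N*N))}"
        using i p TL_succ[OF assms i(1)] by (simp add: TL_len)
      thus "e \<in> cycle_edges (map F (TL N))" unfolding cycle_edges_def L using i(1) by blast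
    qed
  qed
qed

lemma dbl_img: "inj_on F A \<Longrightarrow> a \<in> A \<Longrightarrow> b \<in> A \<Longrightarrow> c \<in> A \<Longrightarrow> d \<in> A \<Longrightarrow>
   {F a, F b} = {F c, F d} \<Longrightarrow> {a, b} = {c, d}"
  by (auto simp: doubleton_eq_iff dest: inj_onD)

lemma app_eq: "length x = length u \<Longrightarrow> (x @ y = u @ w) \<longleftrightarrow> x = u \<and> y = w"
  by simp

lemma dbl_app1:
  assumes "length x = n" "length x' = n" "length u = n" "length u' = n"
    "{x@y, x'@y} = {u@w, u'@w}"
  shows "{x,x'} = {u,u'}"
  using assms by (auto simp: doubleton_eq_iff)

lemma dbl_app2:
  assumes "length x = n" "length u = n"
    "{x@y, x@y'} = {u@w, u@w'}"
  shows "{y,y'} = {w,w'}"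
  using assms by (auto simp: doubleton_eq_iff)

lemma dbl_app3:
  assumes "length x = n" "length x' = n" "length u = n" "x \<noteq> x'"
    "{x@y, x'@y} = {u@w, u@w'}"
  shows False
  using assms by (auto simp: doubleton_eq_iff)

definition phi :: "nat list list \<Rightarrow> nat \<times> nat \<Rightarrow> nat list" where
  "phi H p = (case p of (a,b) \<Rightarrow> H!a @ H!b)"

definition psi :: "nat \<Rightarrow> (nat \<Rightarrow> nat \<Rightarrow> nat) \<Rightarrow> nat list list \<Rightarrow> nat \<Rightarrow> nat \<times> nat \<Rightarrow> nat list" where
  "psi n M H i p = (case p of (a,b) \<Rightarrow> perm_act n (M i) (H!a) @ perm_act n (M i) (H!b))"

locale ctx =
  fixes n :: nat and M :: "nat \<Rightarrow> nat \<Rightarrow> nat" and H :: "nat list list"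
  assumes n1: "1 \<le> n"
    and ham: "dir_ham_cycle n H"
    and lat: "latin_square_id n M"
    and disj: "\<forall>i<n. \<forall>i'<n. i \<noteq> i' \<longrightarrow>
            cycle_edges (map (perm_act n (M i)) H) \<inter> cycle_edges (map (perm_act n (M i')) H) = {}"
    and uni: "(\<Union>i<n. cycle_edges (map (perm_act n (M i)) H)) = qedges n"
begin

abbreviation "N \<equiv> length H"
abbreviation "\<sigma> i \<equiv> perm_act n (M i)"
abbreviation "E i \<equiv> cycle_edges (map (\<sigma> i) H)"

lemma Hset: "set H = qvert n" and Hdist: "distinct H" and H0: "H ! 0 = qorigin n"
  and Hadj: "\<And>i. i < N \<Longrightarrow> qadj n (H ! i) (H ! ((i + 1) mod N))"
  using ham by (auto simp: dir_ham_cycle_def)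

lemma Hnth: "a < N \<Longrightarrow> H ! a \<in> qvert n" using Hset nth_mem by blast
lemma Hlen: "a < N \<Longrightarrow> length (H ! a) = n" using Hnth qvert_len by blast

lemma N3: "3 \<le> N"
proof -
  obtain m where m: "n = Suc m" using n1 by (cases n) auto
  let ?v = "\<lambda>c::nat. c # replicate m 0"
  have "?v ` {0,1,2} \<subseteq> qvert n" using m by (auto simp: qvert_def nth_Cons split: nat.splits)
  moreover have "card (?v ` {0,1,2}) = 3" by simp
  ultimately have "3 \<le> card (qvert n)" using finite_qvert by (metis card_mono)
  moreover have "card (qvert n) = N" using Hset Hdist distinct_card by metis
  ultimately show ?thesis by simp
qed

lemma sig_bij: "i < n \<Longrightarrow> bij_betw (M i) {0..<n} {0..<n}"
  using lat by (simp add: latin_square_id_def)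

lemma adjH: "a < N \<Longrightarrow> qadj n (H!a) (H!(Suc a mod N))"
  using Hadj[of a] by simp

lemma suc_ne': "a < N \<Longrightarrow> Suc a mod N \<noteq> a"
  using suc_ne[of N a] N3 by simp

lemma Hsucc_ne: "a < N \<Longrightarrow> H!a \<noteq> H!(Suc a mod N)"
proof -
  assume a: "a < N"
  have "a \<noteq> Suc a mod N" using suc_ne'[OF a] by simp
  thus ?thesis using nth_eq_iff_index_eq[OF Hdist a smod_lt[OF a]] by simp
qed

lemma sig_surj: "i < n \<Longrightarrow> y \<in> qvert n \<Longrightarrow> \<exists>b<N. y = \<sigma> i (H!b)"
proof -
  assume i: "i < n" and y: "y \<in> qvert n"
  have "y \<in> \<sigma> i ` qvert n" using perm_image[OF sig_bij[OF i]] y by simp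
  then obtain z where "z \<in> set H" "y = \<sigma> i z" using Hset by auto
  thus ?thesis by (metis in_set_conv_nth)
qed

lemma E_elem: "i < n \<Longrightarrow> e \<in> E i \<Longrightarrow> \<exists>a<N. e = {\<sigma> i (H!a), \<sigma> i (H!(Suc a mod N))}"
proof -
  assume "e \<in> E i"
  then obtain a where a: "a < N" "e = {map (\<sigma> i) H ! a, map (\<sigma> i) H ! ((a+1) mod N)}"
    unfolding cycle_edges_def by auto
  thus ?thesis using smod_lt[OF a(1)] by auto
qed

lemma E_in: "a < N \<Longrightarrow> {\<sigma> i (H!a), \<sigma> i (H!(Suc a mod N))} \<in> E i"
proof -
  assume a: "a < N"
  have "Suc a mod N < N" using smod_lt[OF a] .
  thus ?thesis unfolding cycle_edges_def using a by (auto intro!: exI[of _ a])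
qed

lemma sig_inj: "i < n \<Longrightarrow> a < N \<Longrightarrow> a' < N \<Longrightarrow> \<sigma> i (H!a) = \<sigma> i (H!a') \<Longrightarrow> a = a'"
  using inj_onD[OF perm_inj[OF sig_bij]] Hnth Hdist by (metis nth_eq_iff_index_eq)

lemma psi_eq: "psi n M H i (a,b) = \<sigma> i (H!a) @ \<sigma> i (H!b)" by (simp add: psi_def)

lemma psi_inj: "i < n \<Longrightarrow> inj_on (psi n M H i) (grid N)"
proof (rule inj_onI)
  fix p q assume i: "i < n" and p: "p \<in> grid N" and q: "q \<in> grid N" and e: "psi n M H i p = psi n M H i q"
  obtain a b where ab: "p = (a,b)" by fastforce
  obtain c d where cd: "q = (c,d)" by fastforce
  have r: "a < N" "b < N" "c < N" "d < N" using p q ab cd by (auto simp: grid_def)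
  have "\<sigma> i (H!a) = \<sigma> i (H!c) \<and> \<sigma> i (H!b) = \<sigma> i (H!d)"
    using e ab cd by (simp add: psi_eq perm_len)
  thus "p = q" using sig_inj[OF i] r ab cd by auto
qed

lemma phi_inj: "inj_on (phi H) (grid N)"
proof (rule inj_onI)
  fix p q assume p: "p \<in> grid N" and q: "q \<in> grid N" and e: "phi H p = phi H q"
  obtain a b where ab: "p = (a,b)" by fastforce
  obtain c d where cd: "q = (c,d)" by fastforce
  have r: "a < N" "b < N" "c < N" "d < N" using p q ab cd by (auto simp: grid_def)
  have "H!a = H!c \<and> H!b = H!d" using e ab cd r Hlen by (simp add: phi_def)
  thus "p = q" using Hdist r ab cd by (simp add: nth_eq_iff_index_eq)
qed

definition etyp :: "nat \<Rightarrow> nat list set \<Rightarrow> bool" where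
  "etyp i e \<longleftrightarrow> (\<exists>x x' y. e = {x@y, x'@y} \<and> {x,x'} \<in> E i \<and> x \<noteq> x' \<and> x \<in> qvert n \<and> x' \<in> qvert n \<and> y \<in> qvert n)
     \<or> (\<exists>x y y'. e = {x@y, x@y'} \<and> {y,y'} \<in> E i \<and> y \<noteq> y' \<and> x \<in> qvert n \<and> y \<in> qvert n \<and> y' \<in> qvert n)"

lemma sigH: "i < n \<Longrightarrow> a < N \<Longrightarrow> \<sigma> i (H!a) \<in> qvert n"
  using perm_qvert[OF sig_bij Hnth] .

lemma sig_ne: "i < n \<Longrightarrow> a < N \<Longrightarrow> \<sigma> i (H!a) \<noteq> \<sigma> i (H!(Suc a mod N))"
proof
  assume i: "i < n" and a: "a < N" and e: "\<sigma> i (H!a) = \<sigma> i (H!(Suc a mod N))"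
  have "a = Suc a mod N" by (rule sig_inj[OF i a smod_lt[OF a] e])
  thus False using suc_ne'[OF a] by simp
qed

lemma etyp_h: "i < n \<Longrightarrow> a < N \<Longrightarrow> b < N \<Longrightarrow> etyp i {psi n M H i (a,b), psi n M H i (Suc a mod N, b)}"
proof -
  assume i: "i < n" and a: "a < N" and b: "b < N"
  show ?thesis unfolding etyp_def psi_eq
    apply (rule disjI1)
    apply (rule exI[of _ "\<sigma> i (H!a)"], rule exI[of _ "\<sigma> i (H!(Suc a mod N))"], rule exI[of _ "\<sigma> i (H!b)"])
    using E_in[OF a, of i] sig_ne[OF i a] sigH[OF i a] sigH[OF i smod_lt[OF a]] sigH[OF i b] by simp
qed

lemma etyp_v: "i < n \<Longrightarrow> a < N \<Longrightarrow> b < N \<Longrightarrow> etyp i {psi n M H i (a,b), psi n M H i (a, Suc b mod N)}"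
proof -
  assume i: "i < n" and a: "a < N" and b: "b < N"
  show ?thesis unfolding etyp_def psi_eq
    apply (rule disjI2)
    apply (rule exI[of _ "\<sigma> i (H!a)"], rule exI[of _ "\<sigma> i (H!b)"], rule exI[of _ "\<sigma> i (H!(Suc b mod N))"])
    using E_in[OF b, of i] sig_ne[OF i b] sigH[OF i a] sigH[OF i smod_lt[OF b]] sigH[OF i b] by simp
qed

definition ColF :: "nat \<Rightarrow> nat list set set" where
  "ColF i = {{psi n M H i p, psi n M H i (fT N p)} | p. p \<in> grid N}"
definition ColG :: "nat \<Rightarrow> nat list set set" where
  "ColG i = {{psi n M H i p, psi n M H i (gT N p)} | p. p \<in> grid N}"

lemma ColF_typ: "i < n \<Longrightarrow> e \<in> ColF i \<Longrightarrow> etyp i e"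
proof -
  assume i: "i < n" and "e \<in> ColF i"
  then obtain a b where ab: "(a,b) \<in> grid N" "e = {psi n M H i (a,b), psi n M H i (fT N (a,b))}"
    unfolding ColF_def by auto
  have r: "a < N" "b < N" using ab by (auto simp: grid_def)
  show ?thesis using fT_cases[of N a b] etyp_h[OF i r] etyp_v[OF i r] ab(2) by auto
qed

lemma ColG_typ: "i < n \<Longrightarrow> e \<in> ColG i \<Longrightarrow> etyp i e"
proof -
  assume i: "i < n" and "e \<in> ColG i"
  then obtain a b where ab: "(a,b) \<in> grid N" "e = {psi n M H i (a,b), psi n M H i (gT N (a,b))}"
    unfolding ColG_def by auto
  have r: "a < N" "b < N" using ab by (auto simp: grid_def)
  show ?thesis using gT_cases[of N a b] etyp_h[OF i r] etyp_v[OF i r] ab(2) by auto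
qed

lemma etyp_uniq:
  assumes i: "i < n" and j: "j < n" and ti: "etyp i e" and tj: "etyp j e"
  shows "i = j"
proof (rule ccontr)
  assume ij: "i \<noteq> j"
  hence D: "E i \<inter> E j = {}" using disj i j by blast
  from ti show False
  proof (unfold etyp_def, elim disjE exE conjE)
    fix x x' y assume a: "e = {x @ y, x' @ y}" "{x, x'} \<in> E i" "x \<noteq> x'" "x \<in> qvert n" "x' \<in> qvert n" "y \<in> qvert n"
    from tj show False
    proof (unfold etyp_def, elim disjE exE conjE)
      fix u u' w assume b: "e = {u @ w, u' @ w}" "{u, u'} \<in> E j" "u \<noteq> u'" "u \<in> qvert n" "u' \<in> qvert n" "w \<in> qvert n"
      have "{x,x'} = {u,u'}"
        by (rule dbl_app1[where y=y and w=w, OF qvert_len[OF a(4)] qvert_len[OF a(5)] qvert_len[OF b(4)] qvert_len[OF b(5)]])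
           (use a(1) b(1) in simp)
      thus False using D a b by auto
    next
      fix u w w' assume b: "e = {u @ w, u @ w'}" "{w, w'} \<in> E j" "w \<noteq> w'" "u \<in> qvert n" "w \<in> qvert n" "w' \<in> qvert n"
      show False
        by (rule dbl_app3[where y=y and w=w and w'=w', OF qvert_len[OF a(4)] qvert_len[OF a(5)] qvert_len[OF b(4)] a(3)])
           (use a(1) b(1) in simp)
    qed
  next
    fix x y y' assume a: "e = {x @ y, x @ y'}" "{y, y'} \<in> E i" "y \<noteq> y'" "x \<in> qvert n" "y \<in> qvert n" "y' \<in> qvert n"
    from tj show False
    proof (unfold etyp_def, elim disjE exE conjE)
      fix u u' w assume b: "e = {u @ w, u' @ w}" "{u, u'} \<in> E j" "u \<noteq> u'" "u \<in> qvert n" "u' \<in> qvert n" "w \<in> qvert n"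
      show False
        by (rule dbl_app3[where y=w and w=y and w'=y', OF qvert_len[OF b(4)] qvert_len[OF b(5)] qvert_len[OF a(4)] b(3)])
           (use a(1) b(1) in simp)
    next
      fix u w w' assume b: "e = {u @ w, u @ w'}" "{w, w'} \<in> E j" "w \<noteq> w'" "u \<in> qvert n" "w \<in> qvert n" "w' \<in> qvert n"
      have "{y,y'} = {w,w'}"
        by (rule dbl_app2[where y=y and y'=y' and w=w and w'=w', OF qvert_len[OF a(4)] qvert_len[OF b(4)]]) (use a(1) b(1) in simp)
      thus False using D a b by auto
    qed
  qed
qed

lemma E_qedges: "i < n \<Longrightarrow> E i \<subseteq> qedges n"
proof -
  assume "i < n"
  hence "E i \<subseteq> (\<Union>i<n. E i)" by (intro UN_upper) simp
  thus ?thesis using uni by simp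
qed

lemma edge_adj: "{x,x'} \<in> qedges m \<Longrightarrow> qadj m x x'"
proof -
  assume "{x,x'} \<in> qedges m"
  then obtain u v where uv: "{x,x'} = {u,v}" "qadj m u v" unfolding qedges_def by blast
  from uv(1) have "(x = u \<and> x' = v) \<or> (x = v \<and> x' = u)" by (simp add: doubleton_eq_iff)
  thus ?thesis using uv(2) qadj_sym by blast
qed

lemma etyp_qedges: "i < n \<Longrightarrow> etyp i e \<Longrightarrow> e \<in> qedges (2*n)"
proof -
  assume i: "i < n" and t: "etyp i e"
  from t show ?thesis
  proof (unfold etyp_def, elim disjE exE conjE)
    fix x x' y assume a: "e = {x @ y, x' @ y}" "{x, x'} \<in> E i" "x \<noteq> x'" "x \<in> qvert n" "x' \<in> qvert n" "y \<in> qvert n"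
    have "qadj n x x'" using edge_adj E_qedges[OF i] a(2) by blast
    hence "qadj (2*n) (x@y) (x'@y)"
      using qadj_append[OF qvert_len[OF a(4)] qvert_len[OF a(6)] qvert_len[OF a(5)] qvert_len[OF a(6)]] a(6) by simp
    thus ?thesis using a(1) unfolding qedges_def by blast
  next
    fix x y y' assume a: "e = {x @ y, x @ y'}" "{y, y'} \<in> E i" "y \<noteq> y'" "x \<in> qvert n" "y \<in> qvert n" "y' \<in> qvert n"
    have "qadj n y y'" using edge_adj E_qedges[OF i] a(2) by blast
    hence "qadj (2*n) (x@y) (x@y')"
      using qadj_append[OF qvert_len[OF a(4)] qvert_len[OF a(5)] qvert_len[OF a(4)] qvert_len[OF a(6)]] a(4) by simp
    thus ?thesis using a(1) unfolding qedges_def by blast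
  qed
qed

lemma FG_disj: "i < n \<Longrightarrow> ColF i \<inter> ColG i = {}"
proof (rule ccontr)
  assume i: "i < n" and "ColF i \<inter> ColG i \<noteq> {}"
  then obtain p q where p: "p \<in> grid N" and q: "q \<in> grid N"
    and e: "{psi n M H i p, psi n M H i (fT N p)} = {psi n M H i q, psi n M H i (gT N q)}"
    unfolding ColF_def ColG_def by blast
  have N0: "0 < N" using N3 by linarith
  have "{p, fT N p} = {q, gT N q}"
    using dbl_img[OF psi_inj[OF i] p fT_grid[OF N0 p] q gT_grid[OF N0 q] e] .
  thus False using fg_disj[OF N3 p q] by simp
qed

definition K :: "nat list list" where "K = map (phi H) (TL N)"

lemma N0: "0 < N" using N3 by linarith
lemma N2: "2 \<le> N" using N3 by linarith

lemma phi_eq: "phi H (a,b) = H!a @ H!b" by (simp add: phi_def)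

lemma phi_adj: "p \<in> grid N \<Longrightarrow> qadj (2*n) (phi H p) (phi H (fT N p))"
proof -
  assume p: "p \<in> grid N"
  obtain a b where ab: "p = (a,b)" by fastforce
  have r: "a < N" "b < N" using p ab by (auto simp: grid_def)
  have s: "Suc a mod N < N" "Suc b mod N < N" using smod_lt[OF r(1)] smod_lt[OF r(2)] by auto
  from fT_cases[of N a b] show ?thesis
  proof
    assume f: "fT N (a,b) = (Suc a mod N, b)"
    show ?thesis unfolding ab f phi_eq
      using qadj_append[OF Hlen[OF r(1)] Hlen[OF r(2)] Hlen[OF s(1)] Hlen[OF r(2)]] adjH[OF r(1)] Hnth[OF r(2)]
      by simp
  next
    assume f: "fT N (a,b) = (a, Suc b mod N)"
    show ?thesis unfolding ab f phi_eq
      using qadj_append[OF Hlen[OF r(1)] Hlen[OF r(2)] Hlen[OF r(1)] Hlen[OF s(2)]] adjH[OF r(2)] Hnth[OF r(1)]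
      by simp
  qed
qed

lemma phi_img: "phi H ` grid N = qvert (2*n)"
proof
  show "phi H ` grid N \<subseteq> qvert (2*n)"
  proof
    fix v assume "v \<in> phi H ` grid N"
    then obtain a b where ab: "(a,b) \<in> grid N" "v = phi H (a,b)" by auto
    have r: "a < N" "b < N" using ab by (auto simp: grid_def)
    show "v \<in> qvert (2*n)" using ab(2) qvert_append[OF Hlen[OF r(1)] Hlen[OF r(2)]] Hnth r
      by (simp add: phi_eq)
  qed
next
  show "qvert (2*n) \<subseteq> phi H ` grid N"
  proof
    fix v assume "v \<in> qvert (2*n)"
    then obtain x y where xy: "v = x @ y" "x \<in> qvert n" "y \<in> qvert n" by (rule qvert2_split)
    obtain a where a: "a < N" "x = H!a" using xy(2) Hset by (metis in_set_conv_nth)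
    obtain b where b: "b < N" "y = H!b" using xy(3) Hset by (metis in_set_conv_nth)
    have "(a,b) \<in> grid N" using a b by (simp add: grid_def)
    moreover have "v = phi H (a,b)" using xy a b by (simp add: phi_eq)
    ultimately show "v \<in> phi H ` grid N" by blast
  qed
qed

lemma K_ham: "dir_ham_cycle (2*n) K"
  unfolding dir_ham_cycle_def
proof (intro conjI allI impI)
  show "distinct K" unfolding K_def using TL_distinct phi_inj TL_set by (simp add: distinct_map)
  show "set K = qvert (2*n)" unfolding K_def using phi_img TL_set by simp
  have "0 < length (TL N)" unfolding TL_len using N0 by simp
  thus "K \<noteq> []" unfolding K_def by auto
  have "K ! 0 = phi H (0,0)" unfolding K_def using N0 N2 TL_0 by (simp add: TL_len)
  also have "\<dots> = qorigin n @ qorigin n" using H0 by (simp add: phi_eq)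
  also have "\<dots> = qorigin (2*n)" by (simp add: qorigin_def mult_2 replicate_add)
  finally show "K ! 0 = qorigin (2*n)" .
next
  fix i assume i: "i < length K"
  hence i': "i < N*N" by (simp add: K_def TL_len)
  have "(i+1) mod (N*N) < N*N" using smod_lt[OF i'] by simp
  hence e: "K ! ((i+1) mod length K) = phi H (fT N (TL N ! i))"
    using TL_succ[OF N2 i'] by (simp add: K_def TL_len)
  have "K ! i = phi H (TL N ! i)" using i' by (simp add: K_def TL_len)
  moreover have "TL N ! i \<in> grid N" using i' TL_set nth_mem TL_len by metis
  ultimately show "qadj (2*n) (K ! i) (K ! ((i+1) mod length K))" using e phi_adj by simp
qed

lemma img_cong: "(\<And>p. p \<in> A \<Longrightarrow> f p = g p) \<Longrightarrow> {f p | p. p \<in> A} = {g p | p. p \<in> A}"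
  by (intro Collect_cong) metis

lemma rho_lo: "r < n \<Longrightarrow> p \<in> grid N \<Longrightarrow> perm_act (2*n) (dbl n M r) (phi H p) = psi n M H r p"
proof -
  assume r: "r < n" and p: "p \<in> grid N"
  obtain a b where ab: "p = (a,b)" by fastforce
  have rr: "a < N" "b < N" using p ab by (auto simp: grid_def)
  show ?thesis unfolding ab phi_eq psi_eq
    by (rule perm_dbl_lo[OF lat n1 r Hlen[OF rr(1)] Hlen[OF rr(2)]])
qed

lemma rho_hi: "r < n \<Longrightarrow> p \<in> grid N \<Longrightarrow> perm_act (2*n) (dbl n M (n+r)) (phi H p) = psi n M H r (prod.swap p)"
proof -
  assume r: "r < n" and p: "p \<in> grid N"
  obtain a b where ab: "p = (a,b)" by fastforce
  have rr: "a < N" "b < N" using p ab by (auto simp: grid_def)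
  show ?thesis unfolding ab phi_eq
    using perm_dbl_hi[OF lat n1 r Hlen[OF rr(1)] Hlen[OF rr(2)]] by (simp add: psi_eq)
qed

abbreviation "cyc r \<equiv> cycle_edges (map (perm_act (2*n) (dbl n M r)) K)"

lemma cyc_lo: "r < n \<Longrightarrow> cyc r = ColF r"
proof -
  assume r: "r < n"
  have "cyc r = cycle_edges (map (perm_act (2*n) (dbl n M r) \<circ> phi H) (TL N))"
    by (simp add: K_def)
  also have "\<dots> = {{(perm_act (2*n) (dbl n M r) \<circ> phi H) p, (perm_act (2*n) (dbl n M r) \<circ> phi H) (fT N p)} | p. p \<in> grid N}"
    by (rule CE[OF N2])
  also have "\<dots> = ColF r" unfolding ColF_def
    by (rule img_cong) (simp add: rho_lo[OF r] fT_grid[OF N0])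
  finally show ?thesis .
qed

lemma cyc_hi: "r < n \<Longrightarrow> cyc (n+r) = ColG r"
proof -
  assume r: "r < n"
  have "cyc (n+r) = cycle_edges (map (perm_act (2*n) (dbl n M (n+r)) \<circ> phi H) (TL N))"
    by (simp add: K_def)
  also have "\<dots> = {{(perm_act (2*n) (dbl n M (n+r)) \<circ> phi H) p, (perm_act (2*n) (dbl n M (n+r)) \<circ> phi H) (fT N p)} | p. p \<in> grid N}"
    by (rule CE[OF N2])
  also have "\<dots> = {{psi n M H r (prod.swap p), psi n M H r (gT N (prod.swap p))} | p. p \<in> grid N}"
  proof (rule img_cong)
    fix p assume p: "p \<in> grid N"
    obtain a b where ab: "p = (a,b)" by fastforce
    have "prod.swap (fT N p) = gT N (prod.swap p)" using gT_swap[of N b a] ab by simp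
    thus "{(perm_act (2*n) (dbl n M (n+r)) \<circ> phi H) p, (perm_act (2*n) (dbl n M (n+r)) \<circ> phi H) (fT N p)}
        = {psi n M H r (prod.swap p), psi n M H r (gT N (prod.swap p))}"
      using rho_hi[OF r p] rho_hi[OF r fT_grid[OF N0 p]] by simp
  qed
  also have "\<dots> = ColG r" unfolding ColG_def
  proof (rule set_eqI, rule iffI)
    fix e assume "e \<in> {{psi n M H r (prod.swap p), psi n M H r (gT N (prod.swap p))} | p. p \<in> grid N}"
    then obtain p where p: "p \<in> grid N" "e = {psi n M H r (prod.swap p), psi n M H r (gT N (prod.swap p))}" by blast
    have "prod.swap p \<in> grid N" using p(1) by (auto simp: grid_def)
    thus "e \<in> {{psi n M H r q, psi n M H r (gT N q)} | q. q \<in> grid N}" using p(2) by blast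
  next
    fix e assume "e \<in> {{psi n M H r q, psi n M H r (gT N q)} | q. q \<in> grid N}"
    then obtain q where q: "q \<in> grid N" "e = {psi n M H r q, psi n M H r (gT N q)}" by blast
    have "prod.swap q \<in> grid N" "prod.swap (prod.swap q) = q" using q(1) by (auto simp: grid_def)
    thus "e \<in> {{psi n M H r (prod.swap p), psi n M H r (gT N (prod.swap p))} | p. p \<in> grid N}"
      using q(2) by (metis (mono_tags, lifting) mem_Collect_eq)
  qed
  finally show ?thesis .
qed

definition idx :: "nat \<Rightarrow> nat" where "idx r = (if r < n then r else r - n)"

lemma cyc_typ: "r < 2*n \<Longrightarrow> e \<in> cyc r \<Longrightarrow> etyp (idx r) e \<and> idx r < n"
proof -
  assume r: "r < 2*n" and e: "e \<in> cyc r"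
  show ?thesis
  proof (cases "r < n")
    case True thus ?thesis using e cyc_lo ColF_typ by (simp add: idx_def)
  next
    case False
    hence r': "r = n + (r - n)" "r - n < n" using r by auto
    thus ?thesis using e cyc_hi[OF r'(2)] ColG_typ[OF r'(2)] False by (simp add: idx_def)
  qed
qed

lemma cyc_union: "(\<Union>r<2*n. cyc r) = qedges (2*n)"
proof
  show "(\<Union>r<2*n. cyc r) \<subseteq> qedges (2*n)"
    using cyc_typ etyp_qedges by blast
next
  show "qedges (2*n) \<subseteq> (\<Union>r<2*n. cyc r)"
  proof
    fix e assume "e \<in> qedges (2*n)"
    then obtain u v where uv: "e = {u,v}" "qadj (2*n) u v" unfolding qedges_def by blast
    obtain x y where xy: "u = x @ y" "x \<in> qvert n" "y \<in> qvert n"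
      using qadj_vert[OF uv(2)] by (metis qvert2_split)
    obtain x' y' where xy': "v = x' @ y'" "x' \<in> qvert n" "y' \<in> qvert n"
      using qadj_vert[OF uv(2)] by (metis qvert2_split)
    have A: "(qadj n x x' \<and> y = y' \<and> y \<in> qvert n) \<or> (x = x' \<and> x \<in> qvert n \<and> qadj n y y')"
      using uv(2) qadj_append[OF qvert_len[OF xy(2)] qvert_len[OF xy(3)] qvert_len[OF xy'(2)] qvert_len[OF xy'(3)]]
        xy(1) xy'(1) by simp
    from A show "e \<in> (\<Union>r<2*n. cyc r)"
    proof
      assume h: "qadj n x x' \<and> y = y' \<and> y \<in> qvert n"
      have "{x,x'} \<in> qedges n" using h unfolding qedges_def by blast
      then obtain i where i: "i < n" "{x,x'} \<in> E i" using uni by blast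
      obtain a where a: "a < N" "{x,x'} = {\<sigma> i (H!a), \<sigma> i (H!(Suc a mod N))}" using E_elem[OF i] by blast
      obtain b where b: "b < N" "y = \<sigma> i (H!b)" using sig_surj[OF i(1)] h by blast
      have g: "(a,b) \<in> grid N" using a b by (simp add: grid_def)
      have "e = {x @ y, x' @ y}" using uv(1) xy(1) xy'(1) h by simp
      also have "\<dots> = {psi n M H i (a,b), psi n M H i (Suc a mod N, b)}"
        using a(2) b(2) by (auto simp: psi_eq doubleton_eq_iff)
      finally have e: "e = {psi n M H i (a,b), psi n M H i (Suc a mod N, b)}" .
      from fgT_h[of N a b] show ?thesis
      proof
        assume "fT N (a,b) = (Suc a mod N, b)"
        hence "e \<in> cyc i" using cyc_lo[OF i(1)] e g unfolding ColF_def by force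
        thus ?thesis using i(1) by auto
      next
        assume "gT N (a,b) = (Suc a mod N, b)"
        hence "e \<in> cyc (n+i)" using cyc_hi[OF i(1)] e g unfolding ColG_def by force
        thus ?thesis using i(1) by auto
      qed
    next
      assume h: "x = x' \<and> x \<in> qvert n \<and> qadj n y y'"
      have "{y,y'} \<in> qedges n" using h unfolding qedges_def by blast
      then obtain i where i: "i < n" "{y,y'} \<in> E i" using uni by blast
      obtain b where b: "b < N" "{y,y'} = {\<sigma> i (H!b), \<sigma> i (H!(Suc b mod N))}" using E_elem[OF i] by blast
      obtain a where a: "a < N" "x = \<sigma> i (H!a)" using sig_surj[OF i(1)] h by blast
      have g: "(a,b) \<in> grid N" using a b by (simp add: grid_def)
      have "e = {x @ y, x @ y'}" using uv(1) xy(1) xy'(1) h by simp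
      also have "\<dots> = {psi n M H i (a,b), psi n M H i (a, Suc b mod N)}"
        using a(2) b(2) by (auto simp: psi_eq doubleton_eq_iff)
      finally have e: "e = {psi n M H i (a,b), psi n M H i (a, Suc b mod N)}" .
      from fgT_v[of N a b] show ?thesis
      proof
        assume "fT N (a,b) = (a, Suc b mod N)"
        hence "e \<in> cyc i" using cyc_lo[OF i(1)] e g unfolding ColF_def by force
        thus ?thesis using i(1) by auto
      next
        assume "gT N (a,b) = (a, Suc b mod N)"
        hence "e \<in> cyc (n+i)" using cyc_hi[OF i(1)] e g unfolding ColG_def by force
        thus ?thesis using i(1) by auto
      qed
    qed
  qed
qed

lemma cyc_disj: "r < 2*n \<Longrightarrow> r' < 2*n \<Longrightarrow> r \<noteq> r' \<Longrightarrow> cyc r \<inter> cyc r' = {}"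
proof (rule ccontr)
  assume r: "r < 2*n" and r': "r' < 2*n" and ne: "r \<noteq> r'" and "cyc r \<inter> cyc r' \<noteq> {}"
  then obtain e where e: "e \<in> cyc r" "e \<in> cyc r'" by blast
  have "idx r = idx r'" using etyp_uniq cyc_typ[OF r e(1)] cyc_typ[OF r' e(2)] by blast
  hence c: "(r < n \<and> r' = n + r) \<or> (r' < n \<and> r = n + r')" using ne r r' by (auto simp: idx_def split: if_splits)
  thus False
  proof
    assume h: "r < n \<and> r' = n + r"
    thus False using e cyc_lo[of r] cyc_hi[of r] FG_disj[of r] by auto
  next
    assume h: "r' < n \<and> r = n + r'"
    thus False using e cyc_lo[of r'] cyc_hi[of r'] FG_disj[of r'] by auto
  qed
qed

lemma main: "source_cycle (2*n) K"
  unfolding source_cycle_def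
  using K_ham dbl_latin[OF lat n1] cyc_disj cyc_union by blast

end

theorem corollary3:
  fixes n :: nat
  assumes "n \<ge> 1"
    and "has_source_cycle n"
  shows "has_source_cycle (2 * n)"
proof -
  obtain H where "source_cycle n H" using assms(2) by (auto simp: has_source_cycle_def)
  then obtain M where h: "dir_ham_cycle n H" "latin_square_id n M"
    "\<forall>i<n. \<forall>i'<n. i \<noteq> i' \<longrightarrow>
            cycle_edges (map (perm_act n (M i)) H) \<inter> cycle_edges (map (perm_act n (M i')) H) = {}"
    "(\<Union>i<n. cycle_edges (map (perm_act n (M i)) H)) = qedges n"
    unfolding source_cycle_def by blast
  interpret ctx n M H using assms(1) h by unfold_locales
  show ?thesis unfolding has_source_cycle_def using main by blast
qed


end
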